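(* Let $(|B(\lambda)\rangle,\mathcal{M})$ be an $N$-regular quantum scenario that is a paradox. Then: 1. For any $z_0,z_1\in\{0,1\}$, $\bigoplus_{j}r(j,0,z_0)\neq\bigoplus_{j}r(j,1,z_1)$. 2. For each $l\in\{0,1\}$, $\bigoplus_{j}r(j,l,0)=\bigoplus_{j}r(j,l,1)$. (Here $j$ ranges over $0,\dots,N-1$.)
   Context: $\equiv$ is equality modulo $2\pi$; $\oplus$ is addition mod 2. For $\varphi\in\mathbb{R}$, $E_\varphi=\cos\varphi X+\sin\varphi Y$, with $+1$ eigenvector $|\varphi\rangle=\frac{1}{\sqrt2}(|0\rangle+e^{i\varphi}|1\rangle)$ and $-1$ eigenvector $|\varphi+\pi\rangle$; outcomes $+1,-1$ relabelled $0,1$; measurements identified with angles. A measurement scenario $\mathcal{M}=(M_1,M_2,M_3)$ consists of finite sets $M_i\subseteq[0,\pi)$ of angles for qubit $i$; contexts are triples in $M_1\times M_2\times M_3$. For a three-qubit state $|\psi\rangle$, the event $(A,B,C)\to(a,b,c)$ is impossible if $(\langle A+a\pi|\otimes\langle B+b\pi|\otimes\langle C+c\pi|)|\psi\rangle=0$; $(|\psi\rangle,\mathcal{M})$ is a paradox if for every assignment $g$ of outcomes in $\{0,1\}$ to all measurements of $M_1,M_2,M_3$ (as disjoint sets) some context $(A,B,C)$ has $(A,B,C)\to(g(A),g(B),g(C))$ impossible. For $\lambda\in[0,\frac{\pi}{2})$, $|v_\lambda\rangle=\cos\frac{\lambda}{2}|0\rangle+\sin\frac{\lambda}{2}|1\rangle$,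 $|w_\lambda\rangle=\sin\frac{\lambda}{2}|0\rangle+\cos\frac{\lambda}{2}|1\rangle$, $|B(\lambda)\rangle=\frac{1}{\sqrt2}(|00\rangle|v_\lambda\rangle+|11\rangle|w_\lambda\rangle)$. Define modulo $2\pi$: $\beta(\lambda,\varphi)=\varphi-2\arctan\left(\frac{\cos\frac{\lambda}{2}\sin\varphi}{\sin\frac{\lambda}{2}+\cos\frac{\lambda}{2}\cos\varphi}\right)$. For $|B(\lambda)\rangle$, $(A,B,C)\to(a,b,c)$ is impossible iff $A+B\equiv\beta(\lambda,C+c\pi)+(1\oplus a\oplus b)\pi$. $(|B(\lambda)\rangle,\mathcal{M})$ is maximally impossible if for every $C\in M_3$ and $z\in\{0,1\}$: every $A\in M_1$ admits $B\in M_2$, $a,b$ with $(A,B,C)\to(a,b,z)$ impossible, and every $B\in M_2$ admits $A\in M_1$, $a,b$ with $(A,B,C)\to(a,b,z)$ impossible. Then $|M_1|=|M_2|=:N$; write $M_1=\{A_0,\dots,A_{N-1}\}$, $M_2=\{B_0,\dots,B_{N-1}\}$, $M_3=\{C_0,\dots,C_{n-1}\}$; for each $(j,l,z)$ there is a unique $k=:K(j,l,z)$ with $A_j+B_k-\beta(\lambda,C_l+z\pi)$ an integer multiple of $\pi$, and $r(j,l,z)\in\{0,1\}$ is defined by $A_j+B_{K(j,l,z)}-\beta(\lambda,C_l+z\pi)\equiv r(j,l,z)\pi$. $\Psi_l(z)$ is the $\mathbb{Z}_2$-linear system $\{a_j\oplus b_{K(j,l,z)}=r(j,l,z):j=0,\dots,N-1\}$.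 With $n=2$, maximal rank means for all $z_0,z_1$ the coefficient matrix of $\Psi_0(z_0)\cup\Psi_1(z_1)$ has rank $2N-1$ over $\mathbb{Z}_2$. $N$-regular: maximally impossible and of maximal rank, with $|M_1|=|M_2|=N$ and $M_3=\{C_0,C_1\}$. *)

theory Defs
  imports Complex_Main "HOL-Library.Z2" "Jordan_Normal_Form.DL_Rank"
begin

text \<open>Computational basis of a qubit: False = |0>, True = |1>.
  ket phi is the +1 eigenvector of E_phi = cos phi X + sin phi Y,
  |phi> = (|0> + e^(i phi)|1>)/sqrt 2.\<close>
definition ket :: "real \<Rightarrow> bool \<Rightarrow> complex" where
  "ket phi x = (if x then cis phi else 1) / complex_of_real (sqrt 2)"

type_synonym state3 = "bool \<Rightarrow> bool \<Rightarrow> bool \<Rightarrow> complex"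

text \<open>Amplitude (<A+a pi| (x) <B+b pi| (x) <C+c pi|) |psi>; outcomes a b c in {0,1}.\<close>
definition amp :: "state3 \<Rightarrow> real \<Rightarrow> real \<Rightarrow> real \<Rightarrow> nat \<Rightarrow> nat \<Rightarrow> nat \<Rightarrow> complex" where
  "amp psi A B C a b c =
     (\<Sum>x\<in>UNIV. \<Sum>y\<in>UNIV. \<Sum>z\<in>UNIV.
        cnj (ket (A + real a * pi) x) * cnj (ket (B + real b * pi) y)
        * cnj (ket (C + real c * pi) z) * psi x y z)"

definition impossible :: "state3 \<Rightarrow> real \<Rightarrow> real \<Rightarrow> real \<Rightarrow> nat \<Rightarrow> nat \<Rightarrow> nat \<Rightarrow> bool" where
  "impossible psi A B C a b c \<longleftrightarrow> amp psi A B C a b c = 0"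

definition meas_set :: "real set \<Rightarrow> bool" where
  "meas_set M \<longleftrightarrow> finite M \<and> M \<subseteq> {0..<pi}"

definition paradox :: "state3 \<Rightarrow> real set \<Rightarrow> real set \<Rightarrow> real set \<Rightarrow> bool" where
  "paradox psi M1 M2 M3 \<longleftrightarrow>
     (\<forall>g1 g2 g3 :: real \<Rightarrow> nat.
        (\<forall>A\<in>M1. g1 A \<in> {0,1}) \<and> (\<forall>B\<in>M2. g2 B \<in> {0,1}) \<and> (\<forall>C\<in>M3. g3 C \<in> {0,1}) \<longrightarrow>
        (\<exists>A\<in>M1. \<exists>B\<in>M2. \<exists>C\<in>M3. impossible psi A B C (g1 A) (g2 B) (g3 C)))"

definition vlam :: "real \<Rightarrow> bool \<Rightarrow> complex" where
  "vlam lam z = complex_of_real (if z then sin (lam/2) else cos (lam/2))"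

definition wlam :: "real \<Rightarrow> bool \<Rightarrow> complex" where
  "wlam lam z = complex_of_real (if z then cos (lam/2) else sin (lam/2))"

text \<open>|B(lam)> = (|00>|v_lam> + |11>|w_lam>)/sqrt 2.\<close>
definition Bstate :: "real \<Rightarrow> state3" where
  "Bstate lam x y z =
     (if x = y then (if x then wlam lam z else vlam lam z) / complex_of_real (sqrt 2) else 0)"

text \<open>When the denominator vanishes the numerator is nonzero
  (as lam < pi/2), so the arctan is +-pi/2 and 2 arctan = pi (mod 2 pi).\<close>
definition beta :: "real \<Rightarrow> real \<Rightarrow> real" where
  "beta lam phi =
     (let d = sin (lam/2) + cos (lam/2) * cos phi
      in if d = 0 then phi - pi else phi - 2 * arctan (cos (lam/2) * sin phi / d))"

definition max_impossible :: "real \<Rightarrow> real set \<Rightarrow> real set \<Rightarrow> real set \<Rightarrow> bool" where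
  "max_impossible lam M1 M2 M3 \<longleftrightarrow>
     (\<forall>C\<in>M3. \<forall>z\<in>{0,1}.
        (\<forall>A\<in>M1. \<exists>B\<in>M2. \<exists>a\<in>{0,1}. \<exists>b\<in>{0,1}. impossible (Bstate lam) A B C a b z) \<and>
        (\<forall>B\<in>M2. \<exists>A\<in>M1. \<exists>a\<in>{0,1}. \<exists>b\<in>{0,1}. impossible (Bstate lam) A B C a b z))"

definition Kidx :: "real \<Rightarrow> (nat \<Rightarrow> real) \<Rightarrow> (nat \<Rightarrow> real) \<Rightarrow> (nat \<Rightarrow> real) \<Rightarrow> nat
    \<Rightarrow> nat \<Rightarrow> nat \<Rightarrow> nat \<Rightarrow> nat" where
  "Kidx lam A B C N j l z =
     (THE k. k < N \<and> (\<exists>m::int. A j + B k - beta lam (C l + real z * pi) = real_of_int m * pi))"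

definition rval :: "real \<Rightarrow> (nat \<Rightarrow> real) \<Rightarrow> (nat \<Rightarrow> real) \<Rightarrow> (nat \<Rightarrow> real) \<Rightarrow> nat
    \<Rightarrow> nat \<Rightarrow> nat \<Rightarrow> nat \<Rightarrow> nat" where
  "rval lam A B C N j l z =
     (if \<exists>m::int. A j + B (Kidx lam A B C N j l z) - beta lam (C l + real z * pi)
                   = 2 * real_of_int m * pi
      then 0 else 1)"

text \<open>Coefficient matrix over Z_2 of Psi_0(z0) \<union> Psi_1(z1): rows i < N are the
  equations a_i + b_K(i,0,z0), rows N+j are a_j + b_K(j,1,z1); columns c < N stand
  for the unknown a_c and columns N+k for the unknown b_k.\<close>
definition coeff_mat :: "real \<Rightarrow> (nat \<Rightarrow> real) \<Rightarrow> (nat \<Rightarrow> real) \<Rightarrow> (nat \<Rightarrow> real) \<Rightarrow> nat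
    \<Rightarrow> nat \<Rightarrow> nat \<Rightarrow> bit mat" where
  "coeff_mat lam A B C N z0 z1 =
     mat (2*N) (2*N) (\<lambda>(i,c).
       let j = (if i < N then i else i - N);
           l = (if i < N then 0 else 1);
           z = (if i < N then z0 else z1)
       in if c = j \<or> c = N + Kidx lam A B C N j l z then 1 else 0)"

definition max_rank :: "real \<Rightarrow> (nat \<Rightarrow> real) \<Rightarrow> (nat \<Rightarrow> real) \<Rightarrow> (nat \<Rightarrow> real) \<Rightarrow> nat \<Rightarrow> bool" where
  "max_rank lam A B C N \<longleftrightarrow>
     (\<forall>z0\<in>{0,1}. \<forall>z1\<in>{0,1}.
        vec_space.rank (2*N) (coeff_mat lam A B C N z0 z1) = 2*N - 1)"

definition N_regular :: "real \<Rightarrow> (nat \<Rightarrow> real) \<Rightarrow> (nat \<Rightarrow> real) \<Rightarrow> (nat \<Rightarrow> real) \<Rightarrow> nat \<Rightarrow> bool" where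
  "N_regular lam A B C N \<longleftrightarrow>
     inj_on A {..<N} \<and> inj_on B {..<N} \<and> C 0 \<noteq> C 1 \<and>
     meas_set (A ` {..<N}) \<and> meas_set (B ` {..<N}) \<and> meas_set {C 0, C 1} \<and>
     max_impossible lam (A ` {..<N}) (B ` {..<N}) {C 0, C 1} \<and>
     max_rank lam A B C N"

end

theory Submission
  imports Defs
begin


lemma s2_4: "complex_of_real (sqrt 2) * (complex_of_real (sqrt 2) * complex_of_real (sqrt 2) *
       complex_of_real (sqrt 2)) = 4"
proof -
  have "complex_of_real (sqrt 2) * complex_of_real (sqrt 2) = complex_of_real (sqrt 2 * sqrt 2)"
    by (rule of_real_mult[symmetric])
  also have "\<dots> = 2" by simp
  finally have e: "complex_of_real (sqrt 2) * complex_of_real (sqrt 2) = 2" .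
  moreover have "complex_of_real (sqrt 2) * (complex_of_real (sqrt 2) * complex_of_real (sqrt 2) *
       complex_of_real (sqrt 2)) = (complex_of_real (sqrt 2) * complex_of_real (sqrt 2)) *
       (complex_of_real (sqrt 2) * complex_of_real (sqrt 2))" by (simp only: mult.assoc)
  ultimately show ?thesis using e by simp
qed

lemma amp_Bstate:
  "amp (Bstate lam) A B C a b c =
     ((complex_of_real (cos (lam/2)) + complex_of_real (sin (lam/2)) * cis (-(C + real c * pi)))
      + cis (-(A + real a * pi)) * cis (-(B + real b * pi)) *
        (complex_of_real (sin (lam/2)) + complex_of_real (cos (lam/2)) * cis (-(C + real c * pi)))) / 4"
  unfolding amp_def Bstate_def ket_def vlam_def wlam_def
  apply (simp add: UNIV_bool cis_cnj s2_4)
  apply (simp add: distrib_left)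
  done

lemma Z_ne0:
  assumes lam: "0 \<le> lam" "lam < pi/2"
  shows "complex_of_real (sin (lam/2)) + complex_of_real (cos (lam/2)) * cis g \<noteq> 0"
proof
  assume Z: "complex_of_real (sin (lam/2)) + complex_of_real (cos (lam/2)) * cis g = 0"
  have d: "sin (lam/2) + cos (lam/2) * cos g = 0" using arg_cong[OF Z, of Re] by simp
  have e: "cos (lam/2) * sin g = 0" using arg_cong[OF Z, of Im] by simp
  have cpos: "cos (lam/2) > 0" using lam by (intro cos_gt_zero_pi) auto
  have "cos lam > 0" using lam by (intro cos_gt_zero_pi) auto
  have sg: "sin g = 0" using e cpos by simp
  then have "(cos g)^2 = 1" using sin_cos_squared_add[of g] by simp
  moreover have "sin (lam/2) = - cos (lam/2) * cos g" using d by simp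
  ultimately have "(sin (lam/2))^2 = (cos (lam/2))^2" by (simp add: power_mult_distrib)
  moreover have "cos lam = (cos (lam/2))^2 - (sin (lam/2))^2" using cos_double[of "lam/2"] by simp
  ultimately show False using \<open>cos lam > 0\<close> by simp
qed

lemma beta_eq:
  "cis (beta lam g + pi) * (complex_of_real (sin (lam/2)) + complex_of_real (cos (lam/2)) * cis g)
   = - cis g * (complex_of_real (sin (lam/2)) + complex_of_real (cos (lam/2)) * cis (-g))"
proof (cases "sin (lam/2) + cos (lam/2) * cos g = 0")
  case True
  then have b: "beta lam g = g - pi" unfolding beta_def Let_def by simp
  have s: "sin (lam/2) = - (cos g * cos (lam/2))" using True by (simp add: algebra_simps)
  show ?thesis unfolding b
    by (simp add: complex_eq_iff algebra_simps s)
next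
  case False
  define d where "d = sin (lam/2) + cos (lam/2) * cos g"
  define e where "e = cos (lam/2) * sin g"
  define t where "t = arctan (e / d)"
  have d0: "d \<noteq> 0" using False d_def by simp
  have b: "beta lam g = g - 2 * t" unfolding beta_def Let_def t_def e_def d_def using False by simp
  have ct: "cos t \<noteq> 0" unfolding t_def by simp
  have "sin t / cos t = e / d" using tan_arctan[of "e/d"] unfolding t_def tan_def by simp
  then have key: "d * sin t = e * cos t" using ct d0 by (simp add: field_simps)
  have Z: "complex_of_real (sin (lam/2)) + complex_of_real (cos (lam/2)) * cis g = Complex d e"
    by (simp add: complex_eq_iff d_def e_def)
  have cZ: "complex_of_real (sin (lam/2)) + complex_of_real (cos (lam/2)) * cis (-g) = Complex d (-e)"
    by (simp add: complex_eq_iff d_def e_def)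
  have c1: "cis (-t) * Complex d e = cis t * Complex d (-e)"
    using key by (simp add: complex_eq_iff algebra_simps)
  have "cis (beta lam g + pi) = - cis g * (cis (-t) * cis (-t))"
    unfolding b by (simp add: cis_mult complex_eq_iff)
  then have "cis (beta lam g + pi) * Complex d e = - cis g * (cis (-t) * (cis (-t) * Complex d e))"
    by simp
  also have "\<dots> = - cis g * (cis (-t) * cis t * Complex d (-e))" using c1 by simp
  also have "\<dots> = - cis g * Complex d (-e)" by (simp add: cis_mult)
  finally show ?thesis using Z cZ by simp
qed

lemma imp_cong:
  assumes lam: "0 \<le> lam" "lam < pi/2" and imp: "impossible (Bstate lam) A B C a b c"
  shows "\<exists>n::int. A + B - beta lam (C + real c * pi) = (2 * real_of_int n + 1 - real a - real b) * pi"
proof -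
  define g where "g = C + real c * pi"
  define th where "th = A + real a * pi + (B + real b * pi)"
  define sl where "sl = complex_of_real (sin (lam/2))"
  define cl where "cl = complex_of_real (cos (lam/2))"
  define Z where "Z = sl + cl * cis g"
  define W where "W = sl + cl * cis (-g)"
  define E where "E = cis (-(A + real a * pi)) * cis (-(B + real b * pi))"
  have amp0: "(cl + sl * cis (-g)) + E * W = 0"
    using imp unfolding impossible_def amp_Bstate sl_def cl_def W_def E_def g_def by simp
  have k1: "cis g * cis (-g) = 1" by (simp add: cis_mult)
  have k2: "cis th * E = 1" unfolding E_def th_def by (simp add: cis_mult)
  have eq1: "cis th * Z + cis g * W = 0"
  proof -
    have "cis th * Z + cis g * W = cis th * cis g * ((cl + sl * cis (-g)) + E * W)
        + cis th * sl * (1 - cis g * cis (-g)) + cis g * W * (1 - cis th * E)"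
      unfolding Z_def by (simp add: algebra_simps)
    also have "\<dots> = 0" using amp0 k1 k2 by simp
    finally show ?thesis .
  qed
  have eq2: "cis (beta lam g + pi) * Z = - cis g * W"
    unfolding Z_def W_def sl_def cl_def by (rule beta_eq)
  have Zne: "Z \<noteq> 0" unfolding Z_def sl_def cl_def using Z_ne0[OF lam] .
  have "cis th * Z = - (cis g * W)" using eq1 by (simp add: eq_neg_iff_add_eq_0)
  then have "cis th * Z = cis (beta lam g + pi) * Z" using eq2 by simp
  then have "cis th = cis (beta lam g + pi)" using Zne by simp
  then have c1: "cis (th - (beta lam g + pi)) = 1" by (simp add: cis_divide[symmetric])
  have "cos (th - (beta lam g + pi)) = 1" using arg_cong[OF c1, of Re] by (simp only: cis.sel one_complex.sel)
  then obtain n :: int where n: "th - (beta lam g + pi) = real_of_int n * 2 * pi"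
    using cos_one_2pi_int by blast
  then have "A + B - beta lam g = (2 * real_of_int n + 1 - real a - real b) * pi"
    unfolding th_def by (simp add: algebra_simps)
  then show ?thesis unfolding g_def by blast
qed




context vec_space begin

lemma H_submodule:
  "submodule class_ring {v\<in>carrier_vec n. (\<Sum>i<n. v$i) = 0} V"
  apply (unfold_locales)
  apply (auto simp: sum.distrib sum_distrib_left[symmetric])
  done

lemma solvable_aux:
  fixes M :: "'a mat"
  assumes M: "M \<in> carrier_mat n n" and n: "n > 0"
    and rk: "rank M = n - 1"
    and cs: "\<And>c. c < n \<Longrightarrow> (\<Sum>i<n. M $$ (i,c)) = 0"
    and r: "r \<in> carrier_vec n" and rs: "(\<Sum>i<n. r$i) = 0"
  shows "r \<in> span (set (cols M))"
proof (rule ccontr)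
  assume nr: "r \<notin> span (set (cols M))"
  define H :: "'a vec set" where "H = {v\<in>carrier_vec n. (\<Sum>i<n. v$i) = 0}"
  have Hs: "submodule class_ring H V" unfolding H_def by (rule H_submodule)
  have colsH: "set (cols M) \<subseteq> H"
  proof
    fix v assume "v \<in> set (cols M)"
    then obtain c where c: "c < n" "v = col M c" using M unfolding cols_def by auto
    then show "v \<in> H" using M cs[OF c(1)] unfolding H_def by auto
  qed
  have colsC: "set (cols M) \<subseteq> carrier_vec n" using M cols_dim by blast
  have li0: "lin_indpt {}"
    by (metis (no_types) empty_subsetI fin_dim finite_basis_exists subset_li_is_li vec_vs vectorspace.basis_def)
  obtain S where Smax: "maximal S (\<lambda>T. T \<subseteq> set (cols M) \<and> lin_indpt T)" and fS: "finite S"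
    using maximal_exists_superset[of "set (cols M)" "(\<lambda>T. T \<subseteq> set (cols M) \<and> lin_indpt T)" "{}"]
    using li0 by auto
  have cS: "card S = n - 1" using rank_card_indpt[OF M Smax] rk by simp
  have SU: "S \<subseteq> set (cols M)" and Sli: "lin_indpt S" using Smax unfolding maximal_def by auto
  have SC: "S \<subseteq> carrier_vec n" using SU colsC by auto
  have "span S \<subseteq> span (set (cols M))" using span_is_monotone[OF SU] .
  then have rS: "r \<notin> span S" using nr by auto
  have rnS: "r \<notin> S" using rS in_own_span[OF SC] by auto
  have S1li: "lin_indpt (S \<union> {r})" using lin_dep_iff_in_span[OF SC Sli r rnS] rS by auto
  have S1C: "S \<union> {r} \<subseteq> carrier_vec n" using SC r by auto
  have S1H: "S \<union> {r} \<subseteq> H" using SU colsH r rs unfolding H_def by auto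
  define e :: "'a vec" where "e = unit_vec n 0"
  have eC: "e \<in> carrier_vec n" unfolding e_def by simp
  have eH: "e \<notin> H" unfolding H_def e_def using n
    by (simp add: unit_vec_def sum.delta)
  have "span (S \<union> {r}) \<subseteq> H" by (rule span_is_subset[OF S1H Hs])
  then have eS1: "e \<notin> span (S \<union> {r})" using eH by auto
  have enS1: "e \<notin> S \<union> {r}" using eS1 in_own_span[OF S1C] by auto
  have S2li: "lin_indpt (S \<union> {r} \<union> {e})" using lin_dep_iff_in_span[OF S1C S1li eC enS1] eS1 by auto
  have S2C: "S \<union> {r} \<union> {e} \<subseteq> carrier_vec n" using S1C eC by auto
  have "card (S \<union> {r} \<union> {e}) \<le> dim" using li_le_dim(2)[OF fin_dim S2C S2li] .
  moreover have "card (S \<union> {r} \<union> {e}) = n + 1" using cS rnS enS1 fS n by simp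
  ultimately show False using dim_is_n by simp
qed

end



lemma sum_split2: fixes N :: nat shows "(\<Sum>i<2*N. f i) = (\<Sum>i<N. f i) + (\<Sum>i<N. f (N + i))"
proof -
  have "{..<2*N} = {..<N} \<union> ((+) N ` {..<N})" by (auto simp: image_iff) (metis add_diff_inverse_nat lessThan_iff mult_2 nat_add_left_cancel_less)
  moreover have "{..<N} \<inter> ((+) N ` {..<N}) = {}" by auto
  ultimately show ?thesis by (simp add: sum.union_disjoint sum.reindex)
qed

lemma of_nat_bit: "(of_nat n :: bit) = (if even n then 0 else 1)"
  by (induction n) auto

lemma of_nat_bit_eq: "((of_nat p :: bit) = of_nat q) \<longleftrightarrow> p mod 2 = q mod 2"
  by (auto simp: of_nat_bit split: if_splits; presburger)

lemma real_pi_unique: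
  fixes x y :: real and m :: int
  assumes "0 \<le> x" "x < pi" "0 \<le> y" "y < pi" "x - y = real_of_int m * pi"
  shows "x = y"
proof -
  have "\<bar>x - y\<bar> < pi" using assms(1-4) by linarith
  then have "\<bar>real_of_int m\<bar> * pi < 1 * pi" using assms(5) by (simp add: abs_mult)
  then have "\<bar>real_of_int m\<bar> < 1" by simp
  then have "m = 0" by linarith
  then show ?thesis using assms by simp
qed

locale regsc =
  fixes lam :: real and A B C :: "nat \<Rightarrow> real" and N :: nat
  assumes lam0: "0 \<le> lam" and lam1: "lam < pi/2" and reg: "N_regular lam A B C N"
begin

lemma injA: "inj_on A {..<N}" and injB: "inj_on B {..<N}" and C01: "C 0 \<noteq> C 1"
  and maximp: "max_impossible lam (A ` {..<N}) (B ` {..<N}) {C 0, C 1}"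
  and maxrk: "max_rank lam A B C N"
  using reg unfolding N_regular_def by auto

lemma Arng: "j < N \<Longrightarrow> 0 \<le> A j \<and> A j < pi"
  using reg unfolding N_regular_def meas_set_def by auto

lemma Brng: "j < N \<Longrightarrow> 0 \<le> B j \<and> B j < pi"
  using reg unfolding N_regular_def meas_set_def by auto

abbreviation bt :: "nat \<Rightarrow> nat \<Rightarrow> real" where
  "bt l z \<equiv> beta lam (C l + real z * pi)"

lemma K_ex:
  assumes j: "j < N" and l: "l \<in> {0,1}" and z: "z \<in> {0::nat,1}"
  shows "\<exists>k<N. \<exists>m::int. A j + B k - bt l z = real_of_int m * pi"
proof -
  have Cl: "C l \<in> {C 0, C 1}" using l by auto
  have Aj: "A j \<in> A ` {..<N}" using j by auto
  have h1: "\<exists>Bv\<in>B ` {..<N}. \<exists>a\<in>{0,1}. \<exists>b\<in>{0,1}. impossible (Bstate lam) (A j) Bv (C l) a b z"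
    using bspec[OF conjunct1[OF bspec[OF bspec[OF maximp[unfolded max_impossible_def] Cl] z]] Aj] .
  then obtain Bv a b where Bv: "Bv \<in> B ` {..<N}" and ab: "a \<in> {0,1}" "b \<in> {0,1}"
    and imp: "impossible (Bstate lam) (A j) Bv (C l) a b z"
    by blast
  obtain k where k: "k < N" "Bv = B k" using Bv by auto
  obtain n :: int where n: "A j + B k - bt l z = (2 * real_of_int n + 1 - real a - real b) * pi"
    using imp_cong[OF lam0 lam1 imp[unfolded k(2)]] by blast
  have "A j + B k - bt l z = real_of_int (2 * n + 1 - int a - int b) * pi" using n by simp
  then show ?thesis using k(1) by blast
qed

lemma K_uniq:
  assumes "k < N" "k' < N" "A j + B k - bt l z = real_of_int m * pi"
    "A j + B k' - bt l z = real_of_int m' * pi"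
  shows "k = k'"
proof -
  have "B k - B k' = real_of_int (m - m') * pi" using assms(3,4) by (simp add: algebra_simps)
  then have "B k = B k'" using real_pi_unique Brng[OF assms(1)] Brng[OF assms(2)] by blast
  then show ?thesis using injB assms(1,2) by (auto dest: inj_onD)
qed

lemma K_prop:
  assumes j: "j < N" and l: "l \<in> {0,1}" and z: "z \<in> {0::nat,1}"
  shows "Kidx lam A B C N j l z < N \<and> (\<exists>m::int. A j + B (Kidx lam A B C N j l z) - bt l z = real_of_int m * pi)"
proof -
  have "\<exists>!k. k < N \<and> (\<exists>m::int. A j + B k - bt l z = real_of_int m * pi)"
    using K_ex[OF assms] K_uniq by blast
  then show ?thesis unfolding Kidx_def by (rule theI')
qed

lemma K_eq:
  assumes j: "j < N" and l: "l \<in> {0,1}" and z: "z \<in> {0::nat,1}" and k: "k < N"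
    and m: "A j + B k - bt l z = real_of_int m * pi"
  shows "Kidx lam A B C N j l z = k"
  using K_prop[OF j l z] K_uniq[OF _ k _ m] by blast

lemma K_inj:
  assumes "j < N" "j' < N" "l \<in> {0,1}" "z \<in> {0::nat,1}"
    and eq: "Kidx lam A B C N j l z = Kidx lam A B C N j' l z"
  shows "j = j'"
proof -
  obtain m where m: "A j + B (Kidx lam A B C N j l z) - bt l z = real_of_int m * pi"
    using K_prop[OF assms(1,3,4)] by blast
  obtain m' where m': "A j' + B (Kidx lam A B C N j l z) - bt l z = real_of_int m' * pi"
    using K_prop[OF assms(2,3,4)] eq by auto
  have "A j - A j' = real_of_int (m - m') * pi" using m m' by (simp add: algebra_simps)
  then have "A j = A j'" using real_pi_unique Arng[OF assms(1)] Arng[OF assms(2)] by blast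
  then show ?thesis using injA assms(1,2) by (auto dest: inj_onD)
qed

lemma K_surj:
  assumes "k < N" "l \<in> {0,1}" "z \<in> {0::nat,1}"
  shows "\<exists>j<N. Kidx lam A B C N j l z = k"
proof -
  let ?f = "\<lambda>j. Kidx lam A B C N j l z"
  have "?f ` {..<N} \<subseteq> {..<N}" using K_prop assms(2,3) by auto
  moreover have "inj_on ?f {..<N}" using K_inj assms(2,3) by (auto intro!: inj_onI)
  ultimately have "?f ` {..<N} = {..<N}" by (simp add: endo_inj_surj)
  then have "k \<in> ?f ` {..<N}" using assms(1) by simp
  then show ?thesis by auto
qed

lemma r_prop:
  assumes j: "j < N" and l: "l \<in> {0,1}" and z: "z \<in> {0::nat,1}"
  shows "\<exists>m::int. A j + B (Kidx lam A B C N j l z) - bt l z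
            = real_of_int (2 * m + int (rval lam A B C N j l z)) * pi"
proof -
  obtain m0 :: int where m0: "A j + B (Kidx lam A B C N j l z) - bt l z = real_of_int m0 * pi"
    using K_prop[OF assms] by blast
  show ?thesis
  proof (cases "even m0")
    case True
    then obtain m where m: "m0 = 2 * m" by blast
    then have "A j + B (Kidx lam A B C N j l z) - bt l z = 2 * real_of_int m * pi" using m0 by simp
    then have r0: "rval lam A B C N j l z = 0" unfolding rval_def by auto
    have e: "real_of_int (2 * m + int (rval lam A B C N j l z)) * pi = real_of_int m0 * pi"
      using m r0 by simp
    show ?thesis by (rule exI[of _ m], rule trans[OF m0 e[symmetric]])
  next
    case False
    from False obtain m where m: "m0 = 2 * m + 1" by (rule oddE)
    have "\<not> (\<exists>m'::int. A j + B (Kidx lam A B C N j l z) - bt l z = 2 * real_of_int m' * pi)"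
    proof
      assume "\<exists>m'::int. A j + B (Kidx lam A B C N j l z) - bt l z = 2 * real_of_int m' * pi"
      then obtain m' :: int where "real_of_int m0 * pi = 2 * real_of_int m' * pi" using m0 by auto
      then have "real_of_int m0 = real_of_int (2 * m')" by simp
      then have "m0 = 2 * m'" by linarith
      then show False using False by simp
    qed
    then have r1: "rval lam A B C N j l z = 1" unfolding rval_def by auto
    have e: "real_of_int (2 * m + int (rval lam A B C N j l z)) * pi = real_of_int m0 * pi"
      using m r1 by simp
    show ?thesis by (rule exI[of _ m], rule trans[OF m0 e[symmetric]])
  qed
qed

end




context regsc begin

lemma M_carrier: "coeff_mat lam A B C N z0 z1 \<in> carrier_mat (2*N) (2*N)"
  by (simp add: coeff_mat_def)

lemma M_top: "i < N \<Longrightarrow> c < 2*N \<Longrightarrow> coeff_mat lam A B C N z0 z1 $$ (i,c)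
   = (if c = i \<or> c = N + Kidx lam A B C N i 0 z0 then 1 else 0)"
  by (simp add: coeff_mat_def)

lemma M_bot: "i < N \<Longrightarrow> c < 2*N \<Longrightarrow> coeff_mat lam A B C N z0 z1 $$ (N + i,c)
   = (if c = i \<or> c = N + Kidx lam A B C N i 1 z1 then 1 else 0)"
  by (simp add: coeff_mat_def)

lemma delta_count:
  assumes "l \<in> {0,1}" "z \<in> {0::nat,1}" "k < N"
  shows "(\<Sum>i<N. if Kidx lam A B C N i l z = k then (1::bit) else 0) = 1"
proof -
  obtain j0 where j0: "j0 < N" "Kidx lam A B C N j0 l z = k" using K_surj[OF assms(3,1,2)] by blast
  have "(\<Sum>i<N. if Kidx lam A B C N i l z = k then (1::bit) else 0) = (\<Sum>i<N. if i = j0 then (1::bit) else 0)"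
  proof (rule sum.cong)
    fix i assume "i \<in> {..<N}"
    then have "Kidx lam A B C N i l z = k \<longleftrightarrow> i = j0" using K_inj[of i j0 l z] j0 assms(1,2) by auto
    then show "(if Kidx lam A B C N i l z = k then (1::bit) else 0) = (if i = j0 then 1 else 0)" by simp
  qed simp
  also have "\<dots> = 1" using j0(1) by simp
  finally show ?thesis .
qed

lemma col_sum:
  assumes z0: "z0 \<in> {0::nat,1}" and z1: "z1 \<in> {0::nat,1}" and c: "c < 2*N"
  shows "(\<Sum>i<2*N. coeff_mat lam A B C N z0 z1 $$ (i,c)) = 0"
proof -
  have "(\<Sum>i<2*N. coeff_mat lam A B C N z0 z1 $$ (i,c)) =
     (\<Sum>i<N. coeff_mat lam A B C N z0 z1 $$ (i,c)) + (\<Sum>i<N. coeff_mat lam A B C N z0 z1 $$ (N + i,c))"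
    by (rule sum_split2)
  also have "\<dots> = (\<Sum>i<N. if c = i \<or> c = N + Kidx lam A B C N i 0 z0 then 1 else 0)
       + (\<Sum>i<N. if c = i \<or> c = N + Kidx lam A B C N i 1 z1 then 1 else 0)"
    using c by (simp add: M_top M_bot)
  also have "\<dots> = 0"
  proof (cases "c < N")
    case True
    then have "(\<Sum>i<N. if c = i \<or> c = N + Kidx lam A B C N i l z then (1::bit) else 0) = 1" for l z
    proof -
      have "(\<Sum>i<N. if c = i \<or> c = N + Kidx lam A B C N i l z then (1::bit) else 0) = (\<Sum>i<N. if c = i then 1 else 0)"
        using True by (intro sum.cong) auto
      also have "\<dots> = 1" using True by simp
      finally show ?thesis .
    qed
    then show ?thesis by simp
  next
    case False
    define k where "k = c - N"
    have k: "k < N" "c = N + k" using False c unfolding k_def by auto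
    have "(\<Sum>i<N. if c = i \<or> c = N + Kidx lam A B C N i l z then (1::bit) else 0) = 1"
      if "l \<in> {0,1}" "z \<in> {0::nat,1}" for l z
    proof -
      have "(\<Sum>i<N. if c = i \<or> c = N + Kidx lam A B C N i l z then (1::bit) else 0)
          = (\<Sum>i<N. if Kidx lam A B C N i l z = k then 1 else 0)"
        using k by (intro sum.cong) auto
      also have "\<dots> = 1" using delta_count[OF that k(1)] .
      finally show ?thesis .
    qed
    then show ?thesis using z0 z1 by simp
  qed
  finally show ?thesis .
qed

lemma row_eval:
  assumes x: "x \<in> carrier_vec (2*N)" and i: "i < N" and k: "k < N"
  shows "(\<Sum>c<2*N. (if c = i \<or> c = N + k then (1::bit) else 0) * x $ c) = x $ i + x $ (N + k)"
proof -
  have "(\<Sum>c<2*N. (if c = i \<or> c = N + k then (1::bit) else 0) * x $ c)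
      = (\<Sum>c<2*N. (if c = i then x $ c else 0) + (if c = N + k then x $ c else 0))"
    using i by (intro sum.cong) auto
  also have "\<dots> = (if i \<in> {..<2*N} then x $ i else 0) + (if N + k \<in> {..<2*N} then x $ (N + k) else 0)"
    by (simp only: sum.distrib sum.delta finite_lessThan)
  also have "\<dots> = x $ i + x $ (N + k)" using i k by simp
  finally show ?thesis .
qed

lemma row_top:
  assumes x: "x \<in> carrier_vec (2*N)" and i: "i < N" and z0: "z0 \<in> {0::nat,1}"
  shows "(coeff_mat lam A B C N z0 z1 *\<^sub>v x) $ i = x $ i + x $ (N + Kidx lam A B C N i 0 z0)"
proof -
  have kN: "Kidx lam A B C N i 0 z0 < N" using K_prop[OF i _ z0] by simp
  have "(coeff_mat lam A B C N z0 z1 *\<^sub>v x) $ i = (\<Sum>c<2*N. coeff_mat lam A B C N z0 z1 $$ (i,c) * x $ c)"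
    using x i M_carrier[of z0 z1] by (simp add: scalar_prod_def lessThan_atLeast0)
  also have "\<dots> = (\<Sum>c<2*N. (if c = i \<or> c = N + Kidx lam A B C N i 0 z0 then (1::bit) else 0) * x $ c)"
    using i by (intro sum.cong) (auto simp: M_top)
  also have "\<dots> = x $ i + x $ (N + Kidx lam A B C N i 0 z0)" by (rule row_eval[OF x i kN])
  finally show ?thesis .
qed

lemma row_bot:
  assumes x: "x \<in> carrier_vec (2*N)" and i: "i < N" and z1: "z1 \<in> {0::nat,1}"
  shows "(coeff_mat lam A B C N z0 z1 *\<^sub>v x) $ (N + i) = x $ i + x $ (N + Kidx lam A B C N i 1 z1)"
proof -
  have kN: "Kidx lam A B C N i 1 z1 < N" using K_prop[OF i _ z1] by simp
  have "(coeff_mat lam A B C N z0 z1 *\<^sub>v x) $ (N + i) = (\<Sum>c<2*N. coeff_mat lam A B C N z0 z1 $$ (N + i,c) * x $ c)"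
    using x i M_carrier[of z0 z1] by (simp add: scalar_prod_def lessThan_atLeast0)
  also have "\<dots> = (\<Sum>c<2*N. (if c = i \<or> c = N + Kidx lam A B C N i 1 z1 then (1::bit) else 0) * x $ c)"
    using i by (intro sum.cong) (auto simp: M_bot)
  also have "\<dots> = x $ i + x $ (N + Kidx lam A B C N i 1 z1)" by (rule row_eval[OF x i kN])
  finally show ?thesis .
qed

end



context regsc begin

lemma solvable:
  assumes z0: "z0 \<in> {0::nat,1}" and z1: "z1 \<in> {0::nat,1}" and N0: "N > 0"
    and par: "(\<Sum>j<N. rval lam A B C N j 0 z0) mod 2 = (\<Sum>j<N. rval lam A B C N j 1 z1) mod 2"
  shows "\<exists>x\<in>carrier_vec (2*N). \<forall>i<N.
     x $ i + x $ (N + Kidx lam A B C N i 0 z0) = (of_nat (rval lam A B C N i 0 z0) :: bit) \<and>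
     x $ i + x $ (N + Kidx lam A B C N i 1 z1) = of_nat (rval lam A B C N i 1 z1)"
proof -
  define M where "M = coeff_mat lam A B C N z0 z1"
  define rv :: "bit vec" where "rv = vec (2*N) (\<lambda>i. if i < N then of_nat (rval lam A B C N i 0 z0)
      else of_nat (rval lam A B C N (i - N) 1 z1))"
  have Mc: "M \<in> carrier_mat (2*N) (2*N)" unfolding M_def by (rule M_carrier)
  have rk: "vec_space.rank (2*N) M = 2*N - 1" using maxrk z0 z1 unfolding max_rank_def M_def by blast
  have rvc: "rv \<in> carrier_vec (2*N)" unfolding rv_def by simp
  have "(\<Sum>i<2*N. rv $ i) = (\<Sum>i<N. rv $ i) + (\<Sum>i<N. rv $ (N + i))" by (rule sum_split2)
  also have "\<dots> = (\<Sum>i<N. of_nat (rval lam A B C N i 0 z0)) + (\<Sum>i<N. of_nat (rval lam A B C N i 1 z1))"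
    unfolding rv_def by simp
  also have "\<dots> = of_nat ((\<Sum>i<N. rval lam A B C N i 0 z0) + (\<Sum>i<N. rval lam A B C N i 1 z1))"
    by simp
  also have "\<dots> = 0" unfolding of_nat_bit using par by presburger
  finally have rs: "(\<Sum>i<2*N. rv $ i) = 0" .
  have "rv \<in> LinearCombinations.module.span class_ring (module_vec TYPE(bit) (2*N)) (set (cols M))"
    by (rule vec_space.solvable_aux[OF Mc _ rk _ rvc rs]) (use N0 col_sum[OF z0 z1] in \<open>auto simp: M_def\<close>)
  then have "rv \<in> vec_space.col_space (2*N) M" by (simp add: vec_space.col_space_def)
  then obtain x where x: "x \<in> carrier_vec (2*N)" and Mx: "M *\<^sub>v x = rv"
    using vec_space.col_space_eq[OF Mc] Mc by auto
  have allP: "\<forall>i<N.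
     x $ i + x $ (N + Kidx lam A B C N i 0 z0) = of_nat (rval lam A B C N i 0 z0) \<and>
     x $ i + x $ (N + Kidx lam A B C N i 1 z1) = of_nat (rval lam A B C N i 1 z1)"
  proof (intro allI impI conjI)
    fix i assume i: "i < N"
    have "x $ i + x $ (N + Kidx lam A B C N i 0 z0) = (M *\<^sub>v x) $ i"
      unfolding M_def using row_top[OF x i z0] by simp
    also have "\<dots> = of_nat (rval lam A B C N i 0 z0)" using i unfolding Mx rv_def by simp
    finally show "x $ i + x $ (N + Kidx lam A B C N i 0 z0) = of_nat (rval lam A B C N i 0 z0)" .
    have "x $ i + x $ (N + Kidx lam A B C N i 1 z1) = (M *\<^sub>v x) $ (N + i)"
      unfolding M_def using row_bot[OF x i z1] by simp
    also have "\<dots> = of_nat (rval lam A B C N i 1 z1)" using i unfolding Mx rv_def by simp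
    finally show "x $ i + x $ (N + Kidx lam A B C N i 1 z1) = of_nat (rval lam A B C N i 1 z1)" .
  qed
  show ?thesis by (rule bexI[of _ x], rule allP, rule x)
qed

definition bn :: "bit \<Rightarrow> nat" where "bn y = (if y = 0 then 0 else 1)"

lemma of_nat_bn: "(of_nat (bn y) :: bit) = y"
  unfolding bn_def by (cases y) auto

lemma claim1:
  assumes par: "paradox (Bstate lam) (A ` {..<N}) (B ` {..<N}) {C 0, C 1}"
    and z0: "z0 \<in> {0::nat,1}" and z1: "z1 \<in> {0::nat,1}"
  shows "(\<Sum>j<N. rval lam A B C N j 0 z0) mod 2 \<noteq> (\<Sum>j<N. rval lam A B C N j 1 z1) mod 2"
proof
  assume eq: "(\<Sum>j<N. rval lam A B C N j 0 z0) mod 2 = (\<Sum>j<N. rval lam A B C N j 1 z1) mod 2"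
  have N0: "N > 0"
  proof (rule ccontr)
    assume "\<not> N > 0"
    then have "N = 0" by simp
    then show False using par unfolding paradox_def by auto
  qed
  obtain x where x: "x \<in> carrier_vec (2*N)" and sol: "\<forall>i<N.
     x $ i + x $ (N + Kidx lam A B C N i 0 z0) = (of_nat (rval lam A B C N i 0 z0) :: bit) \<and>
     x $ i + x $ (N + Kidx lam A B C N i 1 z1) = of_nat (rval lam A B C N i 1 z1)"
    using solvable[OF z0 z1 N0 eq] by blast
  define g1 where "g1 = (\<lambda>a. bn (x $ the_inv_into {..<N} A a))"
  define g2 where "g2 = (\<lambda>b. bn (x $ (N + the_inv_into {..<N} B b)))"
  define g3 where "g3 = (\<lambda>c. if c = C 0 then z0 else z1)"
  have bn01: "\<And>y. bn y \<in> {0,1}" unfolding bn_def by simp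
  have G1: "\<forall>a\<in>A ` {..<N}. g1 a \<in> {0,1}" unfolding g1_def by (intro ballI, rule bn01)
  have G2: "\<forall>b\<in>B ` {..<N}. g2 b \<in> {0,1}" unfolding g2_def by (intro ballI, rule bn01)
  have G3: "\<forall>c\<in>{C 0, C 1}. g3 c \<in> {0,1}" unfolding g3_def using z0 z1 by simp
  have ex: "\<exists>Av\<in>A ` {..<N}. \<exists>Bv\<in>B ` {..<N}. \<exists>Cv\<in>{C 0, C 1}. impossible (Bstate lam) Av Bv Cv (g1 Av) (g2 Bv) (g3 Cv)"
    using par[unfolded paradox_def, rule_format, of g1 g2 g3] G1 G2 G3 by (simp only: simp_thms)
  then obtain Av where Av: "Av \<in> A ` {..<N}" and
    ex2: "\<exists>Bv\<in>B ` {..<N}. \<exists>Cv\<in>{C 0, C 1}. impossible (Bstate lam) Av Bv Cv (g1 Av) (g2 Bv) (g3 Cv)"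
    by (rule bexE)
  from ex2 obtain Bv where Bv: "Bv \<in> B ` {..<N}" and
    ex3: "\<exists>Cv\<in>{C 0, C 1}. impossible (Bstate lam) Av Bv Cv (g1 Av) (g2 Bv) (g3 Cv)"
    by (rule bexE)
  from ex3 obtain Cv where Cv: "Cv \<in> {C 0, C 1}" and
    imp0: "impossible (Bstate lam) Av Bv Cv (g1 Av) (g2 Bv) (g3 Cv)"
    by (rule bexE)
  obtain j where j: "j < N" and Aj: "Av = A j" using Av by blast
  obtain k where k: "k < N" and Bk: "Bv = B k" using Bv by blast
  have imp: "impossible (Bstate lam) (A j) (B k) Cv (g1 (A j)) (g2 (B k)) (g3 Cv)"
    using imp0 unfolding Aj Bk .
  obtain l where l: "l \<in> {0::nat,1}" and Cl: "Cv = C l" using Cv by auto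
  define zl where "zl = (if l = 0 then z0 else z1)"
  have zl: "zl \<in> {0::nat,1}" using z0 z1 unfolding zl_def by auto
  have g3C: "g3 Cv = zl" unfolding g3_def zl_def Cl using l C01 by auto
  have g1A: "g1 (A j) = bn (x $ j)" unfolding g1_def using the_inv_into_f_f[OF injA] j by simp
  have g2B: "g2 (B k) = bn (x $ (N + k))" unfolding g2_def using the_inv_into_f_f[OF injB] k by simp
  define a where "a = bn (x $ j)"
  define b where "b = bn (x $ (N + k))"
  have imp2: "impossible (Bstate lam) (A j) (B k) (C l) a b zl"
    using imp[unfolded g3C g1A g2B, unfolded Cl] unfolding a_def b_def .
  obtain n :: int where n: "A j + B k - bt l zl = (2 * real_of_int n + 1 - real a - real b) * pi"
    using imp_cong[OF lam0 lam1 imp2] by blast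
  have n2: "A j + B k - bt l zl = real_of_int (2 * n + 1 - int a - int b) * pi" using n by simp
  have Kk: "Kidx lam A B C N j l zl = k" by (rule K_eq[OF j l zl k n2])
  obtain m :: int where m: "A j + B k - bt l zl = real_of_int (2 * m + int (rval lam A B C N j l zl)) * pi"
    using r_prop[OF j l zl] unfolding Kk by blast
  have "real_of_int (2 * n + 1 - int a - int b) = real_of_int (2 * m + int (rval lam A B C N j l zl))"
    using n2 m by simp
  then have ints: "2 * n + 1 - int a - int b = 2 * m + int (rval lam A B C N j l zl)" by linarith
  have row: "x $ j + x $ (N + k) = (of_nat (rval lam A B C N j l zl) :: bit)"
    using sol j l Kk unfolding zl_def by auto
  have "(of_nat (a + b) :: bit) = of_nat (rval lam A B C N j l zl)"
    using row unfolding a_def b_def of_nat_add of_nat_bn .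
  then have "(a + b) mod 2 = rval lam A B C N j l zl mod 2" by (simp only: of_nat_bit_eq)
  then have "int ((a + b) mod 2) = int (rval lam A B C N j l zl mod 2)" by (rule arg_cong)
  then have "(int a + int b) mod 2 = int (rval lam A B C N j l zl) mod 2" by (simp only: of_nat_mod of_nat_add of_nat_numeral)
  moreover have "\<And>p q r nn mm :: int. (p + q) mod 2 = r mod 2 \<Longrightarrow> 2 * nn + 1 - p - q = 2 * mm + r \<Longrightarrow> False"
    by presburger
  ultimately show False using ints by blast
qed

end


lemma three_bits:
  fixes x y w :: nat
  assumes "x < 2" "y < 2" "w < 2" "x \<noteq> w" "y \<noteq> w"
  shows "x = y"
  using assms by arith

theorem corollary18:
  fixes lam :: real and A B C :: "nat \<Rightarrow> real" and N :: nat
  assumes "0 \<le> lam" and "lam < pi / 2"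
    and "N_regular lam A B C N"
    and "paradox (Bstate lam) (A ` {..<N}) (B ` {..<N}) {C 0, C 1}"
  shows "(\<forall>z0\<in>{0::nat,1}. \<forall>z1\<in>{0::nat,1}.
            (\<Sum>j<N. rval lam A B C N j 0 z0) mod 2 \<noteq> (\<Sum>j<N. rval lam A B C N j 1 z1) mod 2)
       \<and> (\<forall>l\<in>{0::nat,1}.
            (\<Sum>j<N. rval lam A B C N j l 0) mod 2 = (\<Sum>j<N. rval lam A B C N j l 1) mod 2)"
proof -
  interpret regsc lam A B C N
    using assms(1-3) by unfold_locales
  have c1: "\<forall>z0\<in>{0::nat,1}. \<forall>z1\<in>{0::nat,1}.
            (\<Sum>j<N. rval lam A B C N j 0 z0) mod 2 \<noteq> (\<Sum>j<N. rval lam A B C N j 1 z1) mod 2"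
    using claim1[OF assms(4)] by blast
  have c2: "\<forall>l\<in>{0::nat,1}.
            (\<Sum>j<N. rval lam A B C N j l 0) mod 2 = (\<Sum>j<N. rval lam A B C N j l 1) mod 2"
  proof
    fix l :: nat assume l: "l \<in> {0,1}"
    show "(\<Sum>j<N. rval lam A B C N j l 0) mod 2 = (\<Sum>j<N. rval lam A B C N j l 1) mod 2"
    proof (cases "l = 0")
      case True
      show ?thesis unfolding True
        by (rule three_bits[OF _ _ _ claim1[OF assms(4), of 0 0] claim1[OF assms(4), of 1 0]]) auto
    next
      case False
      then have l1: "l = 1" using l by auto
      show ?thesis unfolding l1
        by (rule three_bits[OF _ _ _ claim1[OF assms(4), of 0 0, symmetric] claim1[OF assms(4), of 0 1, symmetric]]) auto
    qed
  qed
  show ?thesis using c1 c2 by (rule conjI)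
qed

end
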